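(* Let $k$ be a difference field of characteristic $0$, $R=k\{y_1,\ldots,y_n\}$, $I$ a radical well-mixed monomial $\sigma$-ideal, and $\mathbf{a}\in(\mathbb{N}\cup\{-1\})^n$ with $\mathbf{a}\geqslant\mathbf{c}$ for every character vector $\mathbf{c}$ of $I$. If $\mathbf{b}\in(\mathbb{N}\cup\{-1\})^n$ with $\mathbf{b}\leqslant\mathbf{a}$, then $\mathbf{y}^{x^{\mathbf{b}}}\notin I$ if and only if $\mathbf{y}^{x^{\mathbf{a}-\mathbf{b}}}\in I^{[\mathbf{a}]}$.
   Context: A difference field is a field $k$ with a ring endomorphism $\sigma$; $R=k\{y_1,\ldots,y_n\}$ is the polynomial ring over $k$ in the variables $\sigma^j(y_i)$, with $\sigma$ extended naturally. For $p=\sum_ic_ix^i\in\mathbb{N}[x]$ and $a\in R$, $a^p=\prod_i(\sigma^i(a))^{c_i}$; $\mathbf{y}^{\mathbf{u}}=y_1^{u_1}\cdots y_n^{u_n}$. For an integer vector $\mathbf{b}$ with entries $\ge-1$, $x^{\mathbf{b}}=(x^{b_1},\ldots,x^{b_n})$ with $x^{-1}=0$; $\mathbf{a}-\mathbf{b}$ is coordinatewise subtraction. A $\sigma$-ideal is an ideal stable under $\sigma$; monomial if generated by monomials; well-mixed if $ab\in I\Rightarrow a\sigma(b)\in I$. $\langle F\rangle_r$ is the smallest radical well-mixed $\sigma$-ideal containing $F$. For $\mathbf{b}\in(\mathbb{N}\cup\{-1\})^n$, $\mathfrak{m}^{\mathbf{b}}$ is the $\sigma$-ideal generated by $\{y_i^{x^{b_i}}:b_i\ne-1\}$.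 Vectors are compared componentwise. The character vectors of $I$ are the finitely many vectors $\mathbf{a}_1,\ldots,\mathbf{a}_m\in(\mathbb{N}\cup\{-1\})^n$ forming a minimal set with $I=\langle\mathbf{y}^{x^{\mathbf{a}_1}},\ldots,\mathbf{y}^{x^{\mathbf{a}_m}}\rangle_r$ (equivalently, the componentwise-minimal $\mathbf{a}$ with $\mathbf{y}^{x^{\mathbf{a}}}\in I$). For $\mathbf{b}\leqslant\mathbf{a}$, $\mathbf{a}\backslash\mathbf{b}$ has $i$-th coordinate $a_i+1-b_i$ if $b_i\ge0$ and $-1$ if $b_i=-1$. The Alexander dual is $I^{[\mathbf{a}]}=\bigcap\{\mathfrak{m}^{\mathbf{a}\backslash\mathbf{c}}:\mathbf{c}\text{ a character vector of }I\}$. *)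

theory Defs
  imports Main "HOL-Library.Poly_Mapping"
begin

definition ring_endo :: "('k::field \<Rightarrow> 'k) \<Rightarrow> bool" where
  "ring_endo s \<longleftrightarrow> (\<forall>a b. s (a + b) = s a + s b) \<and> (\<forall>a b. s (a * b) = s a * s b) \<and> s 1 = 1"

text \<open>The difference polynomial ring k{y_i : i in 'n}: polynomial ring over k in the
  variables sigma^j(y_i), encoded as the pair (i, j).\<close>
type_synonym ('n, 'k) dpoly = "(('n \<times> nat) \<Rightarrow>\<^sub>0 nat) \<Rightarrow>\<^sub>0 'k"

definition dvar :: "'n \<Rightarrow> nat \<Rightarrow> ('n, 'k::field) dpoly" where
  "dvar i j = Poly_Mapping.single (Poly_Mapping.single (i, j) 1) 1"

definition shift_mon :: "(('n \<times> nat) \<Rightarrow>\<^sub>0 nat) \<Rightarrow> (('n \<times> nat) \<Rightarrow>\<^sub>0 nat)" where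
  "shift_mon m = (\<Sum>v\<in>Poly_Mapping.keys m. Poly_Mapping.single (fst v, Suc (snd v)) (Poly_Mapping.lookup m v))"

definition dsigma :: "('k::field \<Rightarrow> 'k) \<Rightarrow> ('n, 'k) dpoly \<Rightarrow> ('n, 'k) dpoly" where
  "dsigma s p = (\<Sum>m\<in>Poly_Mapping.keys p. Poly_Mapping.single (shift_mon m) (s (Poly_Mapping.lookup p m)))"

definition is_ideal :: "('n, 'k::field) dpoly set \<Rightarrow> bool" where
  "is_ideal I \<longleftrightarrow> 0 \<in> I \<and> (\<forall>p\<in>I. \<forall>q\<in>I. p + q \<in> I) \<and> (\<forall>r. \<forall>p\<in>I. r * p \<in> I)"

definition is_sigma_ideal :: "('k::field \<Rightarrow> 'k) \<Rightarrow> ('n, 'k) dpoly set \<Rightarrow> bool" where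
  "is_sigma_ideal s I \<longleftrightarrow> is_ideal I \<and> (\<forall>p\<in>I. dsigma s p \<in> I)"

definition is_radical :: "('n, 'k::field) dpoly set \<Rightarrow> bool" where
  "is_radical I \<longleftrightarrow> (\<forall>p (e::nat). p ^ e \<in> I \<longrightarrow> p \<in> I)"

definition well_mixed :: "('k::field \<Rightarrow> 'k) \<Rightarrow> ('n, 'k) dpoly set \<Rightarrow> bool" where
  "well_mixed s I \<longleftrightarrow> (\<forall>p q. p * q \<in> I \<longrightarrow> p * dsigma s q \<in> I)"

definition is_monomial :: "('n, 'k::field) dpoly \<Rightarrow> bool" where
  "is_monomial p \<longleftrightarrow> (\<exists>m. p = Poly_Mapping.single m 1)"

definition ideal_gen :: "('n, 'k::field) dpoly set \<Rightarrow> ('n, 'k) dpoly set" where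
  "ideal_gen S = \<Inter>{J. is_ideal J \<and> S \<subseteq> J}"

definition sigma_ideal_gen :: "('k::field \<Rightarrow> 'k) \<Rightarrow> ('n, 'k) dpoly set \<Rightarrow> ('n, 'k) dpoly set" where
  "sigma_ideal_gen s S = \<Inter>{J. is_sigma_ideal s J \<and> S \<subseteq> J}"

definition monomial_ideal :: "('n, 'k::field) dpoly set \<Rightarrow> bool" where
  "monomial_ideal I \<longleftrightarrow> (\<exists>M. (\<forall>p\<in>M. is_monomial p) \<and> I = ideal_gen M)"

text \<open>Vectors in (N \<union> {-1})^n, encoded as integer vectors with entries \<ge> -1.\<close>
definition valid_vec :: "('n \<Rightarrow> int) \<Rightarrow> bool" where
  "valid_vec b \<longleftrightarrow> (\<forall>i. b i \<ge> -1)"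

text \<open>y^(x^b) = product of sigma^(b_i)(y_i) over i with b_i \<noteq> -1 (x^(-1) = 0 gives factor 1).\<close>
definition ymon :: "('n::finite \<Rightarrow> int) \<Rightarrow> ('n, 'k::field) dpoly" where
  "ymon b = (\<Prod>i\<in>{i. b i \<noteq> -1}. dvar i (nat (b i)))"

definition char_vec :: "('n::finite, 'k::field) dpoly set \<Rightarrow> ('n \<Rightarrow> int) \<Rightarrow> bool" where
  "char_vec I c \<longleftrightarrow> valid_vec c \<and> ymon c \<in> I \<and>
     (\<forall>c'. valid_vec c' \<and> c' \<le> c \<and> ymon c' \<in> I \<longrightarrow> c' = c)"

definition mpow :: "('k::field \<Rightarrow> 'k) \<Rightarrow> ('n \<Rightarrow> int) \<Rightarrow> ('n, 'k) dpoly set" where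
  "mpow s b = sigma_ideal_gen s {dvar i (nat (b i)) | i. b i \<noteq> -1}"

definition vec_bs :: "('n \<Rightarrow> int) \<Rightarrow> ('n \<Rightarrow> int) \<Rightarrow> ('n \<Rightarrow> int)" where
  "vec_bs a b = (\<lambda>i. if b i \<ge> 0 then a i + 1 - b i else -1)"

definition alex_dual :: "('k::field \<Rightarrow> 'k) \<Rightarrow> ('n::finite, 'k) dpoly set \<Rightarrow> ('n \<Rightarrow> int) \<Rightarrow> ('n, 'k) dpoly set" where
  "alex_dual s I a = \<Inter>{mpow s (vec_bs a c) | c. char_vec I c}"

end

theory Submission
  imports Defs
begin

lemma prod_single:
  assumes "finite A"
  shows "(\<Prod>i\<in>A. Poly_Mapping.single (f i) (1::'k::field)) = Poly_Mapping.single (\<Sum>i\<in>A. f i) 1"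
  using assms by (induction A rule: finite_induct) (auto simp: mult_single)

definition mon :: "('n::finite \<Rightarrow> int) \<Rightarrow> ('n \<times> nat) \<Rightarrow>\<^sub>0 nat" where
  "mon b = (\<Sum>i\<in>{i. b i \<noteq> -1}. Poly_Mapping.single (i, nat (b i)) 1)"

lemma ymon_single: "(ymon b :: ('n::finite,'k::field) dpoly) = Poly_Mapping.single (mon b) 1"
  unfolding ymon_def mon_def dvar_def by (rule prod_single) simp

lemma lookup_mon: "Poly_Mapping.lookup (mon b) (i, j) = (if b i \<noteq> -1 \<and> j = nat (b i) then 1 else 0)"
proof -
  have "Poly_Mapping.lookup (mon b) (i, j) = (\<Sum>i'\<in>{i. b i \<noteq> -1}. (if i' = i \<and> j = nat (b i) then 1 else 0))"
    unfolding mon_def lookup_sum lookup_single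
    by (rule sum.cong) (auto simp: when_def)
  also have "\<dots> = (if b i \<noteq> -1 \<and> j = nat (b i) then 1 else 0)"
    by (simp add: sum.delta' split: if_splits) 
  finally show ?thesis .
qed

lemma shift_single: "shift_mon (Poly_Mapping.single (i, j) (1::nat)) = Poly_Mapping.single (i, Suc j) 1"
  unfolding shift_mon_def by simp

lemma dsigma_dvar:
  assumes "ring_endo s"
  shows "dsigma s (dvar i j) = dvar i (Suc j)"
  using assms shift_single[of i j] unfolding dsigma_def dvar_def ring_endo_def by simp

lemma lookup_shift: "Poly_Mapping.lookup (shift_mon m) (i, Suc j) = Poly_Mapping.lookup m (i, j)"
proof -
  have "Poly_Mapping.lookup (shift_mon m) (i, Suc j) =
     (\<Sum>v\<in>Poly_Mapping.keys m. (if v = (i, j) then Poly_Mapping.lookup m v else 0))"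
    unfolding shift_mon_def lookup_sum lookup_single
    by (rule sum.cong) (auto simp: when_def)
  also have "\<dots> = Poly_Mapping.lookup m (i, j)"
    by (simp add: sum.delta in_keys_iff)
  finally show ?thesis .
qed

lemma keys_dsigma: "Poly_Mapping.keys (dsigma s p) \<subseteq> shift_mon ` Poly_Mapping.keys p"
  unfolding dsigma_def by (rule subset_trans[OF keys_sum]) (auto split: if_splits)

lemma ymon_split:
  "(ymon c :: ('n::finite,'k::field) dpoly) = (\<Prod>j\<in>{j. c j \<noteq> -1} - {i}. dvar j (nat (c j))) *
     (if c i = -1 then 1 else dvar i (nat (c i)))"
proof (cases "c i = -1")
  case True
  then have "{j. c j \<noteq> -1} - {i} = {j. c j \<noteq> -1}" by auto
  then show ?thesis using True by (simp add: ymon_def)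
next
  case False
  then show ?thesis unfolding ymon_def
    by (subst prod.remove[of _ i]) (auto simp: mult.commute)
qed

lemma ideal_mult: "is_ideal I \<Longrightarrow> p \<in> I \<Longrightarrow> p * r \<in> I"
  unfolding is_ideal_def by (metis mult.commute)

lemma step_up:
  fixes I :: "('n::finite, 'k::field) dpoly set"
  assumes re: "ring_endo s" and si: "is_sigma_ideal s I" and wm: "well_mixed s I"
    and v: "valid_vec c" and inI: "ymon c \<in> I"
  shows "ymon (c(i := c i + 1)) \<in> I"
proof -
  let ?c' = "c(i := c i + 1)"
  define P :: "('n,'k) dpoly" where "P = (\<Prod>j\<in>{j. c j \<noteq> -1} - {i}. dvar j (nat (c j)))"
  have PP: "(\<Prod>j\<in>{j. ?c' j \<noteq> -1} - {i}. dvar j (nat (?c' j))) = P"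
    unfolding P_def by (rule prod.cong) auto
  have id: "is_ideal I" using si by (simp add: is_sigma_ideal_def)
  have e1: "ymon c = P * (if c i = -1 then 1 else dvar i (nat (c i)))"
    unfolding P_def by (rule ymon_split)
  have "-1 \<le> c i" using v unfolding valid_vec_def by blast
  then have ne: "c i + 1 \<noteq> -1" by linarith
  have e2: "ymon ?c' = P * dvar i (nat (c i + 1))"
  proof -
    have "(ymon ?c' :: ('n,'k) dpoly) = (\<Prod>j\<in>{j. ?c' j \<noteq> -1} - {i}. dvar j (nat (?c' j))) * (if ?c' i = -1 then 1 else dvar i (nat (?c' i)))"
      by (rule ymon_split)
    then have "ymon ?c' = P * (if ?c' i = -1 then 1 else dvar i (nat (?c' i)))" by (simp only: PP)
    then show ?thesis using ne by simp
  qed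
  show ?thesis
  proof (cases "c i = -1")
    case True
    then have "(ymon ?c' :: ('n,'k) dpoly) = ymon c * dvar i 0" using e1 e2 by simp
    then show ?thesis using ideal_mult[OF id inI] by simp
  next
    case False
    have "-1 \<le> c i" using v unfolding valid_vec_def by blast
    then have ci: "c i \<ge> 0" using False by linarith
    have "P * dvar i (nat (c i)) \<in> I" using e1 False inI by simp
    then have "P * dsigma s (dvar i (nat (c i))) \<in> I" using wm unfolding well_mixed_def by blast
    then have "P * dvar i (Suc (nat (c i))) \<in> I" using dsigma_dvar[OF re, of i "nat (c i)"] by argo
    moreover have "Suc (nat (c i)) = nat (c i + 1)" using ci by simp
    ultimately show ?thesis using e2 ci by simp
  qed
qed

lemma mono_up:
  fixes I :: "('n::finite, 'k::field) dpoly set"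
  assumes re: "ring_endo s" and si: "is_sigma_ideal s I" and wm: "well_mixed s I"
  shows "valid_vec c \<Longrightarrow> c \<le> d \<Longrightarrow> ymon c \<in> I \<Longrightarrow> ymon d \<in> I"
proof (induction "nat (\<Sum>i\<in>UNIV. d i - c i)" arbitrary: c rule: less_induct)
  case (less c)
  show ?case
  proof (cases "c = d")
    case True then show ?thesis using less by simp
  next
    case False
    then obtain i where i: "c i < d i" using less.prems(2) by (metis le_funD order_less_le ext)
    let ?c' = "c(i := c i + 1)"
    have v': "valid_vec ?c'" unfolding valid_vec_def
    proof
      fix j have "-1 \<le> c j" using less.prems(1) unfolding valid_vec_def by blast
      then show "-1 \<le> ?c' j" by auto
    qed
    have le': "?c' \<le> d" using less.prems(2) i by (auto simp: le_fun_def)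
    have in': "ymon ?c' \<in> I" using step_up[OF re si wm less.prems(1,3)] .
    have s1: "(\<Sum>j\<in>UNIV. d j - ?c' j) = (\<Sum>j\<in>UNIV. d j - c j) - 1"
    proof -
      have "(\<Sum>j\<in>UNIV. d j - ?c' j) = (\<Sum>j\<in>UNIV. (d j - c j) - (if j = i then 1 else 0))"
        by (rule sum.cong) auto
      also have "\<dots> = (\<Sum>j\<in>UNIV. d j - c j) - 1" by (simp add: sum_subtractf)
      finally show ?thesis .
    qed
    have "(\<Sum>j\<in>UNIV. d j - c j) \<ge> d i - c i"
      using less.prems(2) by (intro member_le_sum) (auto simp: le_fun_def)
    then have "nat (\<Sum>j\<in>UNIV. d j - ?c' j) < nat (\<Sum>i\<in>UNIV. d i - c i)" using s1 i by simp
    then show ?thesis using less.hyps v' le' in' by blast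
  qed
qed

lemma char_exists:
  fixes I :: "('n::finite, 'k::field) dpoly set"
  assumes vb: "valid_vec b" and inI: "ymon b \<in> I"
  shows "\<exists>c. char_vec I c \<and> c \<le> b"
proof -
  let ?P = "\<lambda>c. valid_vec c \<and> c \<le> b \<and> ymon c \<in> I"
  let ?m = "\<lambda>c::'n\<Rightarrow>int. nat (\<Sum>i\<in>UNIV. c i + 1)"
  have "?P b" using vb inI by simp
  from ex_has_least_nat[of ?P b ?m, OF this] obtain c where
    c: "?P c" and least: "\<forall>y. ?P y \<longrightarrow> ?m c \<le> ?m y" by blast
  have "char_vec I c" unfolding char_vec_def
  proof (intro conjI allI impI)
    show "valid_vec c" "ymon c \<in> I" using c by auto
    fix c' assume h: "valid_vec c' \<and> c' \<le> c \<and> ymon c' \<in> I"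
    show "c' = c"
    proof (rule ccontr)
      assume ne: "c' \<noteq> c"
      then obtain i where "c' i \<noteq> c i" by blast
      then have lt: "c' i < c i" using h by (metis le_funD order_less_le)
      have "(\<Sum>i\<in>UNIV. c' i + 1) < (\<Sum>i\<in>UNIV. c i + 1)"
      proof (rule sum_strict_mono_ex1)
        show "\<forall>x\<in>UNIV. c' x + 1 \<le> c x + 1" using h by (auto simp: le_fun_def)
        show "\<exists>a\<in>UNIV. c' a + 1 < c a + 1" using lt by (intro bexI[of _ i]) auto
      qed simp
      moreover have "0 \<le> (\<Sum>i\<in>UNIV. c' i + 1)"
      proof (intro sum_nonneg)
        fix x have "-1 \<le> c' x" using h unfolding valid_vec_def by blast
        then show "0 \<le> c' x + 1" by linarith
      qed
      ultimately have "?m c' < ?m c" by simp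
      moreover have "?P c'" using h c by (auto intro: order_trans)
      ultimately show False using least by fastforce
    qed
  qed
  then show ?thesis using c by blast
qed

lemma dvar_up:
  assumes re: "ring_endo s" and si: "is_sigma_ideal s J" and g: "dvar i d \<in> J"
  shows "dvar i (d + k) \<in> J"
proof (induction k)
  case 0 then show ?case using g by simp
next
  case (Suc k)
  then have "dsigma s (dvar i (d + k)) \<in> J" using si unfolding is_sigma_ideal_def by blast
  then show ?case using dsigma_dvar[OF re, of i "d+k"] by simp
qed

lemma mpow_in:
  fixes a b c :: "'n::finite \<Rightarrow> int"
  assumes re: "ring_endo (s::'k::field \<Rightarrow> 'k)" and ci: "c i \<ge> 0" "b i < c i" "c i \<le> a i" and ba: "b \<le> a"
  shows "(ymon (\<lambda>i. a i - b i) :: ('n,'k) dpoly) \<in> mpow s (vec_bs a c)"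
  unfolding mpow_def sigma_ideal_gen_def
proof (intro InterI, clarify)
  fix J :: "('n,'k) dpoly set"
  assume si: "is_sigma_ideal s J" and gens: "{dvar i (nat (vec_bs a c i)) |i. vec_bs a c i \<noteq> - 1} \<subseteq> J"
  let ?e = "\<lambda>i. a i - b i"
  define d where "d = nat (a i + 1 - c i)"
  have eq: "vec_bs a c i = a i + 1 - c i" using ci by (simp add: vec_bs_def)
  then have "vec_bs a c i \<noteq> -1" using ci by linarith
  then have "dvar i (nat (vec_bs a c i)) \<in> J" using gens by blast
  then have "dvar i d \<in> J" using eq unfolding d_def by simp
  from dvar_up[OF re si this, of "nat (a i - b i) - d"]
  have g: "dvar i (nat (a i - b i)) \<in> J" using ci unfolding d_def by (simp add: nat_diff_distrib')
  have bi: "b i \<le> a i" using ba by (simp add: le_fun_def)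
  have "(ymon ?e :: ('n,'k) dpoly) = (\<Prod>j\<in>{j. ?e j \<noteq> -1} - {i}. dvar j (nat (?e j))) * (if ?e i = -1 then 1 else dvar i (nat (?e i)))"
    by (rule ymon_split)
  also have "\<dots> = (\<Prod>j\<in>{j. ?e j \<noteq> -1} - {i}. dvar j (nat (?e j))) * dvar i (nat (a i - b i))"
    using bi by simp
  finally show "ymon ?e \<in> J" using g si unfolding is_sigma_ideal_def is_ideal_def by simp
qed

definition Jset :: "('n \<Rightarrow> int) \<Rightarrow> ('n, 'k::field) dpoly set" where
  "Jset e = {p. \<forall>m\<in>Poly_Mapping.keys p. \<exists>i j. 0 < Poly_Mapping.lookup m (i, j) \<and> e i \<noteq> -1 \<and> nat (e i) \<le> j}"

lemma Jset_sigma: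
  fixes s :: "'k::field \<Rightarrow> 'k"
  shows "is_sigma_ideal s (Jset e :: ('n,'k) dpoly set)"
  unfolding is_sigma_ideal_def is_ideal_def
proof (intro conjI ballI allI)
  show "0 \<in> Jset e" by (simp add: Jset_def)
next
  fix p q :: "('n,'k) dpoly" assume "p \<in> Jset e" "q \<in> Jset e"
  then show "p + q \<in> Jset e" unfolding Jset_def using keys_add[of p q] by blast
next
  fix r p :: "('n,'k) dpoly" assume p: "p \<in> Jset e"
  show "r * p \<in> Jset e" unfolding Jset_def mem_Collect_eq
  proof (intro ballI)
    fix m assume "m \<in> Poly_Mapping.keys (r * p)"
    then obtain m1 m2 where m: "m = m1 + m2" "m2 \<in> Poly_Mapping.keys p" using keys_mult by blast
    then obtain i j where "0 < Poly_Mapping.lookup m2 (i, j)" "e i \<noteq> -1" "nat (e i) \<le> j"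
      using p unfolding Jset_def by blast
    then show "\<exists>i j. 0 < Poly_Mapping.lookup m (i, j) \<and> e i \<noteq> -1 \<and> nat (e i) \<le> j"
      using m by (auto simp: lookup_add)
  qed
next
  fix p :: "('n,'k) dpoly" assume p: "p \<in> Jset e"
  show "dsigma s p \<in> Jset e" unfolding Jset_def mem_Collect_eq
  proof (intro ballI)
    fix m assume "m \<in> Poly_Mapping.keys (dsigma s p)"
    then obtain m0 where m: "m = shift_mon m0" "m0 \<in> Poly_Mapping.keys p" using keys_dsigma by blast
    then obtain i j where "0 < Poly_Mapping.lookup m0 (i, j)" "e i \<noteq> -1" "nat (e i) \<le> j"
      using p unfolding Jset_def by blast
    then show "\<exists>i j. 0 < Poly_Mapping.lookup m (i, j) \<and> e i \<noteq> -1 \<and> nat (e i) \<le> j"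
      using m lookup_shift[of m0 i j] by (intro exI[of _ i] exI[of _ "Suc j"]) auto
  qed
qed

lemma mpow_notin:
  fixes a b c :: "'n::finite \<Rightarrow> int"
  assumes ca: "c \<le> a" and ba: "b \<le> a" and h: "\<forall>i. c i \<ge> 0 \<longrightarrow> c i \<le> b i"
  shows "(ymon (\<lambda>i. a i - b i) :: ('n,'k::field) dpoly) \<notin> mpow s (vec_bs a c)"
proof
  let ?e = "vec_bs a c"
  assume "(ymon (\<lambda>i. a i - b i) :: ('n,'k) dpoly) \<in> mpow s ?e"
  moreover have "{dvar i (nat (?e i)) |i. ?e i \<noteq> - 1} \<subseteq> (Jset ?e :: ('n,'k) dpoly set)"
  proof clarify
    fix i assume "?e i \<noteq> -1"
    then show "dvar i (nat (?e i)) \<in> (Jset ?e :: ('n,'k) dpoly set)"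
      unfolding Jset_def dvar_def by (auto intro!: exI[of _ i] exI[of _ "nat (?e i)"])
  qed
  ultimately have "(ymon (\<lambda>i. a i - b i) :: ('n,'k) dpoly) \<in> Jset ?e"
    using Jset_sigma[of s ?e] unfolding mpow_def sigma_ideal_gen_def by blast
  then obtain i j where ij: "0 < Poly_Mapping.lookup (mon (\<lambda>i. a i - b i)) (i, j)" "?e i \<noteq> -1" "nat (?e i) \<le> j"
    unfolding ymon_single Jset_def by auto
  have bi: "b i \<le> a i" "c i \<le> a i" using ba ca by (auto simp: le_fun_def)
  from ij(1) have j: "j = nat (a i - b i)" using bi by (simp add: lookup_mon split: if_splits)
  from ij(2) have c0: "c i \<ge> 0" and eq: "?e i = a i + 1 - c i" by (auto simp: vec_bs_def split: if_splits)
  from ij(3) j eq bi have "a i + 1 - c i \<le> a i - b i" by simp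
  then show False using h c0 by force
qed

theorem proposition7p2:
  fixes s :: "'k::field_char_0 \<Rightarrow> 'k"
    and I :: "('n::finite, 'k) dpoly set"
    and a b :: "'n \<Rightarrow> int"
  assumes "ring_endo s"
    and "is_sigma_ideal s I" and "is_radical I" and "well_mixed s I" and "monomial_ideal I"
    and "valid_vec a" and "\<forall>c. char_vec I c \<longrightarrow> c \<le> a"
    and "valid_vec b" and "b \<le> a"
  shows "ymon b \<notin> I \<longleftrightarrow> ymon (\<lambda>i. a i - b i) \<in> alex_dual s I a"
proof -
  note re = assms(1) and si = assms(2) and wm = assms(4) and ca = assms(7) and vb = assms(8) and ba = assms(9)
  have L: "ymon b \<in> I \<longleftrightarrow> (\<exists>c. char_vec I c \<and> c \<le> b)"
  proof
    assume "ymon b \<in> I" then show "\<exists>c. char_vec I c \<and> c \<le> b" using char_exists[OF vb] by blast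
  next
    assume "\<exists>c. char_vec I c \<and> c \<le> b"
    then obtain c where "char_vec I c" "c \<le> b" by blast
    then show "ymon b \<in> I" using mono_up[OF re si wm] unfolding char_vec_def by blast
  qed
  have M: "ymon (\<lambda>i. a i - b i) \<in> mpow s (vec_bs a c) \<longleftrightarrow> \<not> c \<le> b" if cc: "char_vec I c" for c
  proof
    have "c \<le> a" using ca cc by blast
    assume "ymon (\<lambda>i. a i - b i) \<in> mpow s (vec_bs a c)"
    moreover have "c \<le> b \<Longrightarrow> ymon (\<lambda>i. a i - b i) \<notin> mpow s (vec_bs a c)"
      by (rule mpow_notin[OF \<open>c \<le> a\<close> ba]) (auto simp: le_fun_def)
    ultimately show "\<not> c \<le> b" by blast
  next
    have ca': "c \<le> a" using ca cc by blast
    assume "\<not> c \<le> b"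
    then obtain i where i: "\<not> c i \<le> b i" by (auto simp: le_fun_def)
    have "-1 \<le> b i" using vb by (simp add: valid_vec_def)
    then have "c i \<ge> 0" "b i < c i" using i by linarith+
    moreover have "c i \<le> a i" using ca' by (simp add: le_fun_def)
    ultimately show "ymon (\<lambda>i. a i - b i) \<in> mpow s (vec_bs a c)"
      using mpow_in[OF re _ _ _ ba] by blast
  qed
  have R: "ymon (\<lambda>i. a i - b i) \<in> alex_dual s I a \<longleftrightarrow> (\<forall>c. char_vec I c \<longrightarrow> ymon (\<lambda>i. a i - b i) \<in> mpow s (vec_bs a c))"
    unfolding alex_dual_def by blast
  show ?thesis using L R M by blast
qed

end
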